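(* Let $n>1$, let $\lambda\in\mathbb C$ with $|\lambda|\notin\{0,1\}$, and let $H=(\mathbb C^n\setminus\{0\})/\Delta_\lambda$ be the Hopf manifold, where $\Delta_\lambda$ is the group generated by $z\mapsto\lambda z$, equipped with the Hermitian metric $ds^2=\frac{1}{\sum_{k=1}^n z^k\bar z^k}\sum_{j=1}^n dz^j\otimes d\bar z^j$. Then every $\pm$holomorphic complex-valued function defined on a connected open subset of $H$ which is $(1,1)$-geodesic is constant.
   Context: A complex-valued function $\phi$ on a Hermitian manifold with local holomorphic coordinates $(z^i)$ is $(1,1)$-geodesic if $\frac{\partial^2\phi}{\partial z^i\partial\bar z^j}-\Gamma^k_{i\bar j}\frac{\partial\phi}{\partial z^k}-\Gamma^{\bar k}_{i\bar j}\frac{\partial\phi}{\partial\bar z^k}=0$ for all $i,j$, where $\Gamma$ are the Christoffel symbols of the Levi-Civita connection of the metric (equivalently $\nabla d\phi(Z,\overline W)=0$ for all $Z,W\in T^{(1,0)}$). A function is $\pm$holomorphic if it is holomorphic or antiholomorphic. ($H$ is a compact non-Kähler Hermitian manifold diffeomorphic to $S^1\times S^{2n-1}$.) *)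

theory Defs
  imports "HOL-Analysis.Analysis"
begin

text \<open>Points of C^n are vectors of type complex^'n (n = CARD('n)); the underlying
real vector space is R^(2n) with real coordinates x_a = Re(z$a), y_a = Im(z$a).\<close>

definition dderiv :: "('a::real_normed_vector \<Rightarrow> 'b::real_normed_vector) \<Rightarrow> 'a \<Rightarrow> 'a \<Rightarrow> 'b" where
  "dderiv f z u = vector_derivative (\<lambda>t::real. f (z + t *\<^sub>R u)) (at 0)"

text \<open>Christoffel symbols of the Levi-Civita connection of a Riemannian metric g
(g p u v = metric at point p applied to tangent vectors u v), given by the Koszul formula
for constant vector fields: g(Gamma(u,v), w) = 1/2 (u g(v,w) + v g(u,w) - w g(u,v)).\<close>
definition lc_christoffel :: "('a::real_normed_vector \<Rightarrow> 'a \<Rightarrow> 'a \<Rightarrow> real) \<Rightarrow> 'a \<Rightarrow> 'a \<Rightarrow> 'a \<Rightarrow> 'a" where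
  "lc_christoffel g z u v =
     (THE c. \<forall>w. g z c w =
        (dderiv (\<lambda>p. g p v w) z u + dderiv (\<lambda>p. g p u w) z v - dderiv (\<lambda>p. g p u v) z w) / 2)"

text \<open>Covariant Hessian (nabla d phi)(u,v) = u(v phi) - (nabla_u v) phi, for constant fields u, v.\<close>
definition lc_hessian :: "('a::real_normed_vector \<Rightarrow> 'a \<Rightarrow> 'a \<Rightarrow> real) \<Rightarrow> ('a \<Rightarrow> complex) \<Rightarrow> 'a \<Rightarrow> 'a \<Rightarrow> 'a \<Rightarrow> complex" where
  "lc_hessian g \<phi> z u v = dderiv (\<lambda>p. dderiv \<phi> p v) z u - dderiv \<phi> z (lc_christoffel g z u v)"

definition hopf_hermitian :: "complex^'n \<Rightarrow> complex^'n \<Rightarrow> complex^'n \<Rightarrow> complex" where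
  "hopf_hermitian z u v = (\<Sum>j\<in>UNIV. u$j * cnj (v$j)) / (\<Sum>k\<in>UNIV. z$k * cnj (z$k))"

definition hopf_riem :: "complex^'n \<Rightarrow> complex^'n \<Rightarrow> complex^'n \<Rightarrow> real" where
  "hopf_riem z u v = Re (hopf_hermitian z u v)"

text \<open>(1,1)-geodesic: (nabla d phi)(d/dz^a, d/d conj z^b) = 0 for all a b, where the
real bilinear Hessian is extended complex-bilinearly and
d/dz^a = (d/dx_a - i d/dy_a)/2, d/d conj z^b = (d/dx_b + i d/dy_b)/2.
The common factor 1/4 is dropped.\<close>
definition geodesic11 :: "(complex^'n \<Rightarrow> complex^'n \<Rightarrow> complex^'n \<Rightarrow> real) \<Rightarrow> (complex^'n) set \<Rightarrow> (complex^'n \<Rightarrow> complex) \<Rightarrow> bool" where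
  "geodesic11 g W \<phi> \<longleftrightarrow> (\<forall>z\<in>W. \<forall>a b.
     (let X = (\<lambda>i. axis i (1::complex)); Y = (\<lambda>i. axis i \<i>) in
       lc_hessian g \<phi> z (X a) (X b) + \<i> * lc_hessian g \<phi> z (X a) (Y b)
       - \<i> * lc_hessian g \<phi> z (Y a) (X b) + lc_hessian g \<phi> z (Y a) (Y b) = 0))"

definition holomorphic_nv :: "(complex^'n \<Rightarrow> complex) \<Rightarrow> (complex^'n) set \<Rightarrow> bool" where
  "holomorphic_nv f W \<longleftrightarrow> (\<forall>z\<in>W. \<exists>f'. (f has_derivative f') (at z) \<and> (\<forall>v. f' (\<i> *s v) = \<i> * f' v))"

definition antiholomorphic_nv :: "(complex^'n \<Rightarrow> complex) \<Rightarrow> (complex^'n) set \<Rightarrow> bool" where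
  "antiholomorphic_nv f W \<longleftrightarrow> holomorphic_nv (\<lambda>z. cnj (f z)) W"

text \<open>Open subsets of the Hopf manifold H = (C^n - {0})/Delta_lambda correspond to open subsets
W of C^n - {0} invariant under z \<mapsto> lambda z (and its inverse); functions on them correspond
to Delta_lambda-invariant functions on W.  The subset of H is connected iff W admits no
splitting into two disjoint nonempty invariant open sets.\<close>
definition hopf_invariant :: "complex \<Rightarrow> (complex^'n) set \<Rightarrow> bool" where
  "hopf_invariant lam W \<longleftrightarrow> (\<forall>z. z \<in> W \<longleftrightarrow> lam *s z \<in> W)"

definition hopf_open :: "complex \<Rightarrow> (complex^'n) set \<Rightarrow> bool" where
  "hopf_open lam W \<longleftrightarrow> open W \<and> W \<subseteq> - {0} \<and> hopf_invariant lam W"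

definition hopf_connected :: "complex \<Rightarrow> (complex^'n) set \<Rightarrow> bool" where
  "hopf_connected lam W \<longleftrightarrow> \<not> (\<exists>A B. hopf_open lam A \<and> hopf_open lam B \<and> A \<inter> B = {} \<and>
        A \<union> B = W \<and> A \<noteq> {} \<and> B \<noteq> {})"

end

theory Submission
  imports Defs "HOL-Complex_Analysis.Complex_Analysis"
begin


lemma scaleR_vec_cx: "(t::real) *\<^sub>R (v::complex^'n) = (complex_of_real t) *s v"
  unfolding vec_eq_iff by (simp add: scaleR_conv_of_real[where 'a=complex])

lemma e1: "c *s (v::complex^'n) = Re c *\<^sub>R v + Im c *\<^sub>R (\<i> *s v)"
  unfolding vec_eq_iff scaleR_vec_cx by (simp add: complex_eq_iff algebra_simps)

lemma clin:
  fixes D :: "complex^'n \<Rightarrow> complex"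
  assumes "linear D" "\<And>v. D (\<i> *s v) = \<i> * D v"
  shows "D (c *s v) = c * D v"
proof -
  have "D (c *s v) = Re c *\<^sub>R D v + Im c *\<^sub>R D (\<i> *s v)"
    using assms(1) by (subst e1) (simp only: linear_add linear_scale)
  also have "\<dots> = Re c *\<^sub>R D v + Im c *\<^sub>R (\<i> * D v)" using assms(2) by simp
  also have "\<dots> = c * D v"
    by (simp only: scaleR_conv_of_real[where 'a=complex]) (simp add: complex_eq_iff algebra_simps)
  finally show ?thesis .
qed

lemma dderiv_eq:
  assumes "(f has_derivative f') (at p)"
  shows "dderiv f p v = f' v"
proof -
  have l: "((\<lambda>t::real. p + t *\<^sub>R v) has_derivative (\<lambda>t. t *\<^sub>R v)) (at 0)"
    by (auto intro!: derivative_eq_intros)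
  have "((\<lambda>t::real. f (p + t *\<^sub>R v)) has_derivative (\<lambda>t. f' (t *\<^sub>R v))) (at 0)"
    using has_derivative_compose[OF l] assms by simp
  moreover have "(\<lambda>t. f' (t *\<^sub>R v)) = (\<lambda>t. t *\<^sub>R f' v)"
    using assms has_derivative_bounded_linear by (auto simp: linear_simps)
  ultimately have "((\<lambda>t::real. f (p + t *\<^sub>R v)) has_vector_derivative f' v) (at 0)"
    by (simp add: has_vector_derivative_def)
  then show ?thesis unfolding dderiv_def by (rule vector_derivative_at)
qed

lemma bl_smul: "bounded_linear (\<lambda>h::complex. h *s (e::complex^'n))"
proof -
  have "linear (\<lambda>h::complex. h *s e)"
    by (rule linearI) (simp_all add: vec_eq_iff scaleR_conv_of_real[where 'a=complex] algebra_simps)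
  then show ?thesis by (simp add: linear_conv_bounded_linear)
qed

lemma line_deriv:
  fixes \<psi> :: "complex^'n \<Rightarrow> complex"
  assumes "(\<psi> has_derivative Dp) (at (z + s *s e))" "linear Dp" "\<And>v. Dp (\<i> *s v) = \<i> * Dp v"
  shows "((\<lambda>s. \<psi> (z + s *s e)) has_field_derivative Dp e) (at s)"
proof -
  have l: "((\<lambda>s. z + s *s e) has_derivative (\<lambda>h. h *s e)) (at s)"
    using bounded_linear.has_derivative[OF bl_smul, of "\<lambda>s. s" "\<lambda>h. h"]
    by (auto intro!: derivative_eq_intros)
  have "((\<lambda>s. \<psi> (z + s *s e)) has_derivative (\<lambda>h. Dp (h *s e))) (at s)"
    using has_derivative_compose[OF l assms(1)] by simp
  moreover have "(\<lambda>h. Dp (h *s e)) = (\<lambda>h. Dp e * h)"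
    using clin[where D=Dp and v=e, OF assms(2,3)] by (auto simp: mult.commute)
  ultimately show ?thesis by (simp add: has_field_derivative_def)
qed

lemma S2:
  fixes \<psi> :: "complex^'n \<Rightarrow> complex" and D :: "complex^'n \<Rightarrow> complex^'n \<Rightarrow> complex"
  assumes W: "open W" "z \<in> W"
   and D1: "\<And>p. p\<in>W \<Longrightarrow> (\<psi> has_derivative D p) (at p)"
   and D2: "\<And>p v. p\<in>W \<Longrightarrow> D p (\<i> *s v) = \<i> * D p v"
  shows "vector_derivative (\<lambda>t. dderiv \<psi> (z + t *\<^sub>R (c *s e)) (c' *s e)) (at 0)
           = c' * c * deriv (deriv (\<lambda>s. \<psi> (z + s *s e))) 0"
   and "vector_derivative (\<lambda>t. dderiv (\<lambda>p. cnj (\<psi> p)) (z + t *\<^sub>R (c *s e)) (c' *s e)) (at 0)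
           = cnj (c' * c * deriv (deriv (\<lambda>s. \<psi> (z + s *s e))) 0)"
proof -
  define G where "G = (\<lambda>s. \<psi> (z + s *s e))"
  define U where "U = (\<lambda>s. z + s *s e) -` W"
  have lin: "linear (D p)" if "p \<in> W" for p
    using D1[OF that] has_derivative_bounded_linear bounded_linear.linear by blast
  have contl: "continuous (at x) (\<lambda>s. z + s *s e)" for x
    using bounded_linear.has_derivative[OF bl_smul, of "\<lambda>s. s" "\<lambda>h. h"]
    by (intro has_derivative_continuous) (auto intro!: derivative_eq_intros)
  have oU: "open U" unfolding U_def by (rule continuous_open_vimage[OF W(1) contl])
  have U0: "0 \<in> U" using W(2) by (simp add: U_def)
  have hG: "(G has_field_derivative D (z + s *s e) e) (at s)" if "s \<in> U" for s
  proof -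
    have p: "z + s *s e \<in> W" using that by (simp add: U_def)
    show ?thesis unfolding G_def by (rule line_deriv[where Dp="D (z + s *s e)", OF D1[OF p] lin[OF p] D2[OF p]])
  qed
  have holG: "G holomorphic_on U"
    using hG unfolding holomorphic_on_def field_differentiable_def by (meson has_field_derivative_at_within)
  have dG: "deriv G s = D (z + s *s e) e" if "s \<in> U" for s
    using hG[OF that] by (rule DERIV_imp_deriv)
  have holdG: "deriv G holomorphic_on U" using holomorphic_deriv[OF holG oU] .
  define K where "K = deriv (deriv G) 0"
  have hK: "(deriv G has_field_derivative K) (at 0)"
    unfolding K_def using holomorphic_derivI[OF holdG oU U0] .
  have hf: "((\<lambda>t::real. complex_of_real t * c) has_vector_derivative c) (at 0)"
    by (auto intro!: derivative_eq_intros)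
  have h1: "((\<lambda>t::real. c' * deriv G (complex_of_real t * c)) has_vector_derivative c' * (c * K)) (at 0)"
    using has_vector_derivative_mult_right[OF field_vector_diff_chain_at[OF hf, of "deriv G" K]] hK
    by (simp add: o_def)
  define S where "S = {t::real. z + t *\<^sub>R (c *s e) \<in> W}"
  have eqv: "t *\<^sub>R (c *s e) = (complex_of_real t * c) *s e" for t
    unfolding vec_eq_iff by (simp add: scaleR_conv_of_real[where 'a=complex])
  have oS: "open S"
  proof -
    have "S = (\<lambda>t. complex_of_real t * c) -` U" by (auto simp: S_def U_def eqv)
    moreover have "continuous (at x) (\<lambda>t. complex_of_real t * c)" for x
      by (intro continuous_intros)
    ultimately show ?thesis using continuous_open_vimage[OF oU] by metis
  qed
  have S0: "0 \<in> S" using W(2) by (simp add: S_def)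
  have eq1: "c' * deriv G (complex_of_real t * c) = dderiv \<psi> (z + t *\<^sub>R (c *s e)) (c' *s e)"
    if "t \<in> S" for t
  proof -
    have p: "z + (complex_of_real t * c) *s e \<in> W" using that by (simp add: S_def eqv)
    have "dderiv \<psi> (z + t *\<^sub>R (c *s e)) (c' *s e) = D (z + (complex_of_real t * c) *s e) (c' *s e)"
      unfolding eqv by (rule dderiv_eq[OF D1[OF p]])
    also have "\<dots> = c' * D (z + (complex_of_real t * c) *s e) e"
      by (rule clin[where D="D (z + (complex_of_real t * c) *s e)" and c=c' and v=e, OF lin[OF p] D2[OF p]])
    also have "\<dots> = c' * deriv G (complex_of_real t * c)"
      using dG p by (simp add: U_def)
    finally show ?thesis by simp
  qed
  have h2: "((\<lambda>t. dderiv \<psi> (z + t *\<^sub>R (c *s e)) (c' *s e)) has_vector_derivative c' * (c * K)) (at 0)"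
    by (rule has_vector_derivative_transform_within_open[OF h1 oS S0 eq1])
  show "vector_derivative (\<lambda>t. dderiv \<psi> (z + t *\<^sub>R (c *s e)) (c' *s e)) (at 0)
           = c' * c * deriv (deriv (\<lambda>s. \<psi> (z + s *s e))) 0"
    using vector_derivative_at[OF h2] by (simp add: K_def G_def mult.assoc)
  have eq2: "cnj (dderiv \<psi> (z + t *\<^sub>R (c *s e)) (c' *s e)) = dderiv (\<lambda>p. cnj (\<psi> p)) (z + t *\<^sub>R (c *s e)) (c' *s e)"
    if "t \<in> S" for t
  proof -
    have p: "z + t *\<^sub>R (c *s e) \<in> W" using that by (simp add: S_def)
    have "((\<lambda>p. cnj (\<psi> p)) has_derivative (\<lambda>h. cnj (D (z + t *\<^sub>R (c *s e)) h))) (at (z + t *\<^sub>R (c *s e)))"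
      using has_derivative_cnj[OF D1[OF p]] .
    then show ?thesis using dderiv_eq D1[OF p] by metis
  qed
  have h3: "((\<lambda>t. dderiv (\<lambda>p. cnj (\<psi> p)) (z + t *\<^sub>R (c *s e)) (c' *s e)) has_vector_derivative cnj (c' * (c * K))) (at 0)"
    by (rule has_vector_derivative_transform_within_open[OF has_vector_derivative_cnj[OF h2] oS S0 eq2])
  show "vector_derivative (\<lambda>t. dderiv (\<lambda>p. cnj (\<psi> p)) (z + t *\<^sub>R (c *s e)) (c' *s e)) (at 0)
           = cnj (c' * c * deriv (deriv (\<lambda>s. \<psi> (z + s *s e))) 0)"
    using vector_derivative_at[OF h3] by (simp add: K_def G_def mult.assoc)
qed



lemma riem_eq: "hopf_riem p v w = inner v w / inner p p"
proof -
  have 1: "(\<Sum>k\<in>UNIV. p$k * cnj (p$k)) = complex_of_real (inner p p)"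
    by (simp add: inner_vec_def inner_complex_def complex_mult_cnj power2_eq_square)
  have 2: "Re (\<Sum>j\<in>UNIV. v$j * cnj (w$j)) = inner v w"
    by (simp add: inner_vec_def inner_complex_def Re_sum)
  show ?thesis unfolding hopf_riem_def hopf_hermitian_def 1 using 2 by (simp add: Re_divide_of_real)
qed

lemma dd_riem:
  fixes z :: "complex^'n"
  assumes "z \<noteq> 0"
  shows "dderiv (\<lambda>p. hopf_riem p v w) z u = - inner v w * (2 * inner z u) / (inner z z)^2"
proof -
  have N: "inner z z \<noteq> 0" using assms by simp
  have ex: "inner (z + t *\<^sub>R u) (z + t *\<^sub>R u) = inner z z + 2 * t * inner z u + t^2 * inner u u" for t
    by (simp add: inner_add inner_commute power2_eq_square algebra_simps)
  have "((\<lambda>t. inner v w / (inner z z + 2 * t * inner z u + t^2 * inner u u)) has_real_derivative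
        - inner v w * (2 * inner z u) / (inner z z)^2) (at 0)"
    using N by (auto intro!: derivative_eq_intros simp: power2_eq_square)
  then have "((\<lambda>t. hopf_riem (z + t *\<^sub>R u) v w) has_vector_derivative
        - inner v w * (2 * inner z u) / (inner z z)^2) (at 0)"
    by (simp add: riem_eq ex has_real_derivative_iff_has_vector_derivative)
  then show ?thesis unfolding dderiv_def by (rule vector_derivative_at)
qed

lemma christoffel_eq:
  fixes z :: "complex^'n"
  assumes "z \<noteq> 0"
  shows "lc_christoffel hopf_riem z u v =
     (1 / inner z z) *\<^sub>R (inner u v *\<^sub>R z - inner z u *\<^sub>R v - inner z v *\<^sub>R u)"
     (is "_ = ?G")
proof -
  have N: "inner z z \<noteq> 0" using assms by simp
  have key: "hopf_riem z ?G w =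
        (dderiv (\<lambda>p. hopf_riem p v w) z u + dderiv (\<lambda>p. hopf_riem p u w) z v - dderiv (\<lambda>p. hopf_riem p u v) z w) / 2"
    for w
    apply (simp only: dd_riem[OF assms])
    using N by (simp add: riem_eq inner_diff_left inner_diff_right inner_add_right inner_add_left inner_commute field_simps power2_eq_square)
  show ?thesis unfolding lc_christoffel_def
  proof (rule the_equality)
    show "\<forall>w. hopf_riem z ?G w =
        (dderiv (\<lambda>p. hopf_riem p v w) z u + dderiv (\<lambda>p. hopf_riem p u w) z v - dderiv (\<lambda>p. hopf_riem p u v) z w) / 2"
      using key by blast
  next
    fix c assume "\<forall>w. hopf_riem z c w =
        (dderiv (\<lambda>p. hopf_riem p v w) z u + dderiv (\<lambda>p. hopf_riem p u w) z v - dderiv (\<lambda>p. hopf_riem p u v) z w) / 2"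
    then have "\<forall>w. hopf_riem z c w = hopf_riem z ?G w" using key by metis
    then have "\<And>G. G = ?G \<Longrightarrow> inner c (c - G) = inner G (c - G)"
    proof -
      fix G assume G: "G = ?G" "\<forall>w. hopf_riem z c w = hopf_riem z ?G w"
      then have "inner c (c - G) / inner z z = inner G (c - G) / inner z z"
        unfolding riem_eq[symmetric] by metis
      then show "inner c (c - G) = inner G (c - G)" using N by simp
    qed
    then have "inner (c - ?G) (c - ?G) = 0" by (simp only: inner_diff_left)
    then show "c = ?G" by simp
  qed
qed



lemma inner_axis_c: "inner (x::complex^'n) (c *s axis a 1) = inner (vec_nth x a) c"
proof -
  have eq: "inner (vec_nth x k) (vec_nth (c *s axis a 1) k) = (if k = a then inner (vec_nth x a) c else 0)" for k
    by (auto simp: axis_def)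
  show ?thesis unfolding inner_vec_def eq by simp
qed

lemma point_eq:
  fixes \<psi> :: "complex^'n \<Rightarrow> complex" and D :: "complex^'n \<Rightarrow> complex^'n \<Rightarrow> complex"
  assumes W: "open W" "0 \<notin> W" "z \<in> W"
   and D1: "\<And>p. p\<in>W \<Longrightarrow> (\<psi> has_derivative D p) (at p)"
   and D2: "\<And>p v. p\<in>W \<Longrightarrow> D p (\<i> *s v) = \<i> * D p v"
   and geo: "geodesic11 hopf_riem W \<psi> \<or> geodesic11 hopf_riem W (\<lambda>p. cnj (\<psi> p))"
  shows "D z z = vec_nth z a * D z (axis a 1)"
proof -
  define e where "e = axis a (1::complex)"
  have ax1: "axis a (1::complex) = 1 *s e" by (simp add: e_def)
  have axi: "axis a \<i> = \<i> *s e" unfolding e_def vec_eq_iff axis_def by simp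
  have z0: "z \<noteq> 0" using W by auto
  define N where "N = inner z z"
  have lin: "linear (D z)"
    using D1[OF W(3)] has_derivative_bounded_linear bounded_linear.linear by blast
  define Gm where "Gm = (\<lambda>U V. lc_christoffel hopf_riem z U V)"
  have Gsym: "Gm U V = Gm V U" for U V
    unfolding Gm_def christoffel_eq[OF z0] by (simp add: inner_commute algebra_simps)
  have DG: "D z (Gm U V) = of_real (1/N) * (of_real (inner U V) * D z z
      - of_real (inner z U) * D z V - of_real (inner z V) * D z U)" for U V
    unfolding Gm_def christoffel_eq[OF z0] N_def using lin
    by (simp add: linear_diff linear_scale scaleR_conv_of_real[where 'a=complex] diff_divide_distrib)
  define K where "K = deriv (deriv (\<lambda>s. \<psi> (z + s *s e))) 0"
  have S2a: "dderiv (\<lambda>p. dderiv \<psi> p (c' *s e)) z (c *s e) = c' * c * K" for c c'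
    using S2(1)[OF W(1,3) D1 D2, of c e c'] unfolding K_def
    by (subst dderiv_def[of "\<lambda>p. dderiv \<psi> p (c' *s e)"])
  have S2b: "dderiv (\<lambda>p. dderiv (\<lambda>p. cnj (\<psi> p)) p (c' *s e)) z (c *s e) = cnj (c' * c * K)" for c c'
    using S2(2)[OF W(1,3) D1 D2, of c e c'] unfolding K_def
    by (subst dderiv_def[of "\<lambda>p. dderiv (\<lambda>p. cnj (\<psi> p)) p (c' *s e)"])
  have hessA: "lc_hessian hopf_riem \<psi> z (c *s e) (c' *s e) = c' * c * K - D z (Gm (c *s e) (c' *s e))" for c c'
    unfolding lc_hessian_def S2a Gm_def using dderiv_eq[OF D1[OF W(3)]] by simp
  have hessB: "lc_hessian hopf_riem (\<lambda>p. cnj (\<psi> p)) z (c *s e) (c' *s e)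
       = cnj (c' * c * K) - cnj (D z (Gm (c *s e) (c' *s e)))" for c c'
    unfolding lc_hessian_def S2b Gm_def using dderiv_eq[OF has_derivative_cnj[OF D1[OF W(3)]]] by simp
  have sum0: "D z (Gm (1 *s e) (1 *s e)) + D z (Gm (\<i> *s e) (\<i> *s e)) = 0"
    using geo
  proof
    assume g: "geodesic11 hopf_riem W \<psi>"
    have "lc_hessian hopf_riem \<psi> z (axis a 1) (axis a 1) + \<i> * lc_hessian hopf_riem \<psi> z (axis a 1) (axis a \<i>)
       - \<i> * lc_hessian hopf_riem \<psi> z (axis a \<i>) (axis a 1) + lc_hessian hopf_riem \<psi> z (axis a \<i>) (axis a \<i>) = 0"
      using g W(3) unfolding geodesic11_def Let_def by blast
    then have "lc_hessian hopf_riem \<psi> z (1 *s e) (1 *s e) + \<i> * lc_hessian hopf_riem \<psi> z (1 *s e) (\<i> *s e)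
       - \<i> * lc_hessian hopf_riem \<psi> z (\<i> *s e) (1 *s e) + lc_hessian hopf_riem \<psi> z (\<i> *s e) (\<i> *s e) = 0"
      unfolding ax1 axi .
    then show ?thesis unfolding hessA using Gsym[of "1 *s e" "\<i> *s e"] by (simp add: algebra_simps)
  next
    assume g: "geodesic11 hopf_riem W (\<lambda>p. cnj (\<psi> p))"
    have "lc_hessian hopf_riem (\<lambda>p. cnj (\<psi> p)) z (axis a 1) (axis a 1) + \<i> * lc_hessian hopf_riem (\<lambda>p. cnj (\<psi> p)) z (axis a 1) (axis a \<i>)
       - \<i> * lc_hessian hopf_riem (\<lambda>p. cnj (\<psi> p)) z (axis a \<i>) (axis a 1) + lc_hessian hopf_riem (\<lambda>p. cnj (\<psi> p)) z (axis a \<i>) (axis a \<i>) = 0"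
      using g W(3) unfolding geodesic11_def Let_def by blast
    then have "lc_hessian hopf_riem (\<lambda>p. cnj (\<psi> p)) z (1 *s e) (1 *s e) + \<i> * lc_hessian hopf_riem (\<lambda>p. cnj (\<psi> p)) z (1 *s e) (\<i> *s e)
       - \<i> * lc_hessian hopf_riem (\<lambda>p. cnj (\<psi> p)) z (\<i> *s e) (1 *s e) + lc_hessian hopf_riem (\<lambda>p. cnj (\<psi> p)) z (\<i> *s e) (\<i> *s e) = 0"
      unfolding ax1 axi .
    then have "cnj (D z (Gm (1 *s e) (1 *s e)) + D z (Gm (\<i> *s e) (\<i> *s e))) = 0"
      unfolding hessB using Gsym[of "1 *s e" "\<i> *s e"] by (simp add: algebra_simps)
    then show ?thesis by (metis complex_cnj_zero_iff)
  qed
  have i1: "inner (1 *s e) (1 *s e) = 1" "inner (\<i> *s e) (\<i> *s e) = 1"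
    unfolding e_def inner_axis_c by (simp_all add: inner_complex_def axis_def)
  have i2: "inner z (1 *s e) = Re (vec_nth z a)" "inner z (\<i> *s e) = Im (vec_nth z a)"
    unfolding e_def inner_axis_c by (simp_all add: inner_complex_def)
  have c1: "D z (1 *s e) = D z e" "D z (\<i> *s e) = \<i> * D z e"
    using D2[OF W(3)] by simp_all
  have "of_real (1/N) * ((D z z - 2 * of_real (Re (vec_nth z a)) * D z e)
          + (D z z - 2 * of_real (Im (vec_nth z a)) * (\<i> * D z e))) = 0"
    using sum0 unfolding DG i1 i2 c1 by (simp add: algebra_simps)
  moreover have "N \<noteq> 0" using z0 N_def by simp
  ultimately have A0: "(D z z - 2 * of_real (Re (vec_nth z a)) * D z e)
          + (D z z - 2 * of_real (Im (vec_nth z a)) * (\<i> * D z e)) = 0"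
    by simp
  have "D z z - (of_real (Re (vec_nth z a)) + \<i> * of_real (Im (vec_nth z a))) * D z e
     = (1/2) * ((D z z - 2 * of_real (Re (vec_nth z a)) * D z e)
          + (D z z - 2 * of_real (Im (vec_nth z a)) * (\<i> * D z e)))"
    by (simp add: algebra_simps)
  then have "D z z = (of_real (Re (vec_nth z a)) + \<i> * of_real (Im (vec_nth z a))) * D z e"
    using A0 by simp
  also have "of_real (Re (vec_nth z a)) + \<i> * of_real (Im (vec_nth z a)) = vec_nth z a"
    by (simp add: complex_eq_iff)
  finally show ?thesis by (simp add: e_def)
qed



lemma decomp:
  fixes L :: "complex^'n \<Rightarrow> complex"
  assumes "linear L" "\<And>v. L (\<i> *s v) = \<i> * L v"
  shows "L v = (\<Sum>a\<in>UNIV. vec_nth v a * L (axis a 1))"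
proof -
  have "L v = L (\<Sum>a\<in>UNIV. vec_nth v a *s axis a 1)" by (simp add: basis_expansion)
  also have "\<dots> = (\<Sum>a\<in>UNIV. L (vec_nth v a *s axis a 1))" using assms(1) by (simp add: linear_sum o_def)
  also have "\<dots> = (\<Sum>a\<in>UNIV. vec_nth v a * L (axis a 1))"
    by (rule sum.cong[OF refl]) (rule clin[OF assms])
  finally show ?thesis .
qed

lemma line_zero:
  fixes \<psi> :: "complex^'n \<Rightarrow> complex" and D :: "complex^'n \<Rightarrow> complex^'n \<Rightarrow> complex"
  assumes W: "open W" "z \<in> W"
   and D1: "\<And>p. p\<in>W \<Longrightarrow> (\<psi> has_derivative D p) (at p)"
   and D2: "\<And>p v. p\<in>W \<Longrightarrow> D p (\<i> *s v) = \<i> * D p v"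
   and Z: "\<And>p. p \<in> W \<Longrightarrow> vec_nth p a * D p (axis a 1) = 0"
  shows "D z (axis a 1) = 0"
proof (cases "vec_nth z a = 0")
  case False then show ?thesis using Z[OF W(2)] by simp
next
  case True
  define e where "e = axis a (1::complex)"
  define G where "G = (\<lambda>s. \<psi> (z + s *s e))"
  define U where "U = (\<lambda>s. z + s *s e) -` W"
  have lin: "linear (D p)" if "p \<in> W" for p
    using D1[OF that] has_derivative_bounded_linear bounded_linear.linear by blast
  have contl: "continuous (at x) (\<lambda>s. z + s *s e)" for x
    using bounded_linear.has_derivative[OF bl_smul, of "\<lambda>s. s" "\<lambda>h. h"]
    by (intro has_derivative_continuous) (auto intro!: derivative_eq_intros)
  have oU: "open U" unfolding U_def by (rule continuous_open_vimage[OF W(1) contl])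
  have U0: "0 \<in> U" using W(2) by (simp add: U_def)
  have hG: "(G has_field_derivative D (z + s *s e) e) (at s)" if "s \<in> U" for s
  proof -
    have p: "z + s *s e \<in> W" using that by (simp add: U_def)
    show ?thesis unfolding G_def by (rule line_deriv[where Dp="D (z + s *s e)", OF D1[OF p] lin[OF p] D2[OF p]])
  qed
  have holG: "G holomorphic_on U"
    using hG unfolding holomorphic_on_def field_differentiable_def by (meson has_field_derivative_at_within)
  have dG: "deriv G s = D (z + s *s e) e" if "s \<in> U" for s
    using hG[OF that] by (rule DERIV_imp_deriv)
  have holdG: "deriv G holomorphic_on U" using holomorphic_deriv[OF holG oU] .
  then have "continuous_on U (deriv G)" by (rule holomorphic_on_imp_continuous_on)
  then have "isCont (deriv G) 0" using oU U0 continuous_on_eq_continuous_at by blast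
  then have t1: "(deriv G \<longlongrightarrow> deriv G 0) (at 0)" by (simp add: isCont_def)
  have "eventually (\<lambda>s. s \<in> U - {0}) (at 0)" by (rule eventually_at_in_open[OF oU U0])
  then have "eventually (\<lambda>s. deriv G s = 0) (at 0)"
  proof (rule eventually_mono)
    fix s assume s: "s \<in> U - {0}"
    then have p: "z + s *s e \<in> W" by (simp add: U_def)
    have "vec_nth (z + s *s e) a = s" using True by (simp add: e_def)
    then have "D (z + s *s e) e = 0" using Z[OF p] s by (simp add: e_def)
    then show "deriv G s = 0" using dG s by simp
  qed
  then have t2: "(deriv G \<longlongrightarrow> 0) (at 0)" by (rule tendsto_eventually)
  have "deriv G 0 = 0" using tendsto_unique[OF at_neq_bot t1 t2] .
  then show ?thesis using dG[OF U0] by (simp add: e_def)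
qed



theorem mainTheorem3:
  fixes lam :: complex and W :: "(complex^'n) set" and f :: "complex^'n \<Rightarrow> complex"
  assumes "CARD('n) > 1"
    and "norm lam \<noteq> 0" and "norm lam \<noteq> 1"
    and "hopf_open lam W" and "hopf_connected lam W"
    and "\<forall>z\<in>W. f (lam *s z) = f z"
    and "holomorphic_nv f W \<or> antiholomorphic_nv f W"
    and "geodesic11 hopf_riem W f"
  shows "\<exists>c. \<forall>z\<in>W. f z = c"
proof -
  have oW: "open W" and W0: "0 \<notin> W" and inv: "hopf_invariant lam W"
    using assms(4) unfolding hopf_open_def by auto
  obtain \<psi> where hol: "holomorphic_nv \<psi> W" and f\<psi>: "f = \<psi> \<or> f = (\<lambda>p. cnj (\<psi> p))"
  proof (cases "holomorphic_nv f W")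
    case True then show ?thesis using that by blast
  next
    case False
    then have "holomorphic_nv (\<lambda>z. cnj (f z)) W" using assms(7) unfolding antiholomorphic_nv_def by blast
    moreover have "f = (\<lambda>p. cnj (cnj (f p)))" by simp
    ultimately show ?thesis using that by blast
  qed
  have geo: "geodesic11 hopf_riem W \<psi> \<or> geodesic11 hopf_riem W (\<lambda>p. cnj (\<psi> p))"
    using f\<psi> assms(8) by auto
  obtain D where D: "\<forall>p\<in>W. (\<psi> has_derivative D p) (at p) \<and> (\<forall>v. D p (\<i> *s v) = \<i> * D p v)"
    using hol unfolding holomorphic_nv_def by metis
  have D1: "\<And>p. p\<in>W \<Longrightarrow> (\<psi> has_derivative D p) (at p)" using D by blast
  have D2: "\<And>p v. p\<in>W \<Longrightarrow> D p (\<i> *s v) = \<i> * D p v" using D by blast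
  have lin: "linear (D p)" if "p \<in> W" for p
    using D1[OF that] has_derivative_bounded_linear bounded_linear.linear by blast
  have Z: "vec_nth p a * D p (axis a 1) = 0" if p: "p \<in> W" for p a
  proof -
    have pe: "\<And>b. D p p = vec_nth p b * D p (axis b 1)"
      by (rule point_eq[OF oW W0 p D1 D2 geo])
    have "D p p = (\<Sum>b\<in>UNIV. vec_nth p b * D p (axis b 1))"
      by (rule decomp[OF lin[OF p] D2[OF p]])
    also have "\<dots> = (\<Sum>b\<in>(UNIV::'n set). D p p)" using pe by simp
    also have "\<dots> = of_nat CARD('n) * D p p" by simp
    finally have "(of_nat CARD('n) - 1) * D p p = 0" by (simp add: algebra_simps)
    moreover have "(of_nat CARD('n) :: complex) - 1 \<noteq> 0"
    proof
      assume "(of_nat CARD('n) :: complex) - 1 = 0"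
      then have "(of_nat CARD('n) :: complex) = of_nat 1" by simp
      then have "CARD('n) = 1" using of_nat_eq_iff by blast
      then show False using assms(1) by simp
    qed
    ultimately have "D p p = 0" by simp
    then show ?thesis using pe[of a] by simp
  qed
  have Dz: "D p v = 0" if p: "p \<in> W" for p v
  proof -
    have "D p v = (\<Sum>b\<in>UNIV. vec_nth v b * D p (axis b 1))"
      by (rule decomp[OF lin[OF p] D2[OF p]])
    also have "\<dots> = 0" using line_zero[OF oW p D1 D2 Z] by simp
    finally show ?thesis .
  qed
  have loc: "\<exists>r>0. ball p r \<subseteq> W \<and> (\<forall>q\<in>ball p r. f q = f p)" if p: "p \<in> W" for p
  proof -
    obtain r where r: "r > 0" "ball p r \<subseteq> W" using oW p by (meson openE)
    have "\<exists>c. \<forall>x\<in>ball p r. \<psi> x = c"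
    proof (rule has_derivative_zero_constant[OF convex_ball])
      fix x assume "x \<in> ball p r"
      then have x: "x \<in> W" using r by blast
      have dx: "D x = (\<lambda>h. 0)" by (rule ext) (rule Dz[OF x])
      have "(\<psi> has_derivative D x) (at x within ball p r)"
        using D1[OF x] by (rule has_derivative_at_withinI)
      then show "(\<psi> has_derivative (\<lambda>h. 0)) (at x within ball p r)"
        unfolding dx .
    qed
    then obtain c where c: "\<forall>x\<in>ball p r. \<psi> x = c" by blast
    have "\<forall>q\<in>ball p r. f q = f p"
    proof
      fix q assume "q \<in> ball p r"
      then have "\<psi> q = \<psi> p" using c r(1) by simp
      then show "f q = f p" using f\<psi> by auto
    qed
    then show ?thesis using r by blast
  qed
  show ?thesis
  proof (cases "W = {}")
    case True then show ?thesis by blast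
  next
    case False
    then obtain z0 where z0: "z0 \<in> W" by blast
    define A where "A = {z\<in>W. f z = f z0}"
    define B where "B = {z\<in>W. f z \<noteq> f z0}"
    have oA: "open A" unfolding open_contains_ball
    proof
      fix x assume "x \<in> A"
      then have xW: "x \<in> W" by (simp add: A_def)
      obtain r where r: "r > 0" "ball x r \<subseteq> W" "\<forall>q\<in>ball x r. f q = f x"
        using loc[OF xW] by (elim exE conjE) (rule that)
      have "ball x r \<subseteq> A"
      proof
        fix q assume q: "q \<in> ball x r"
        then have qW: "q \<in> W" using r(2) by blast
        have fq: "f q = f x" using r(3) q by blast
        have "f x = f z0" using \<open>x \<in> A\<close> by (simp add: A_def)
        then show "q \<in> A" using qW fq by (simp add: A_def)
      qed
      then show "\<exists>e>0. ball x e \<subseteq> A" using r(1) by blast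
    qed
    have oB: "open B" unfolding open_contains_ball
    proof
      fix x assume "x \<in> B"
      then have xW: "x \<in> W" by (simp add: B_def)
      obtain r where r: "r > 0" "ball x r \<subseteq> W" "\<forall>q\<in>ball x r. f q = f x"
        using loc[OF xW] by (elim exE conjE) (rule that)
      have "ball x r \<subseteq> B"
      proof
        fix q assume q: "q \<in> ball x r"
        then have qW: "q \<in> W" using r(2) by blast
        have fq: "f q = f x" using r(3) q by blast
        have "f x \<noteq> f z0" using \<open>x \<in> B\<close> by (simp add: B_def)
        then show "q \<in> B" using qW fq by (simp add: B_def)
      qed
      then show "\<exists>e>0. ball x e \<subseteq> B" using r(1) by blast
    qed
    have invW: "z \<in> W \<longleftrightarrow> lam *s z \<in> W" for z using inv unfolding hopf_invariant_def by blast
    have hA: "hopf_open lam A" unfolding hopf_open_def hopf_invariant_def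
      using oA W0 invW assms(6) unfolding A_def by auto
    have hB: "hopf_open lam B" unfolding hopf_open_def hopf_invariant_def
      using oB W0 invW assms(6) unfolding B_def by auto
    have "A \<inter> B = {}" "A \<union> B = W" "A \<noteq> {}" unfolding A_def B_def using z0 by auto
    then have "B = {}" using assms(5) hA hB unfolding hopf_connected_def by blast
    then show ?thesis unfolding B_def by blast
  qed
qed

end
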